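(* Let $(X,+,d)$ be an Abelian group with translation-invariant metric $d$. Let $A\in K(X)$, let $(A_n)$ be a sequence in $K(X)$ converging to $A$ in the Pompeiu–Hausdorff metric, and assume that $(S(A_n))$ converges in $K(X)$ to some $B\in K(X)$. Then $B\subset S(A)$.
   Context: $d$ satisfies $d(x,y)=d(x+z,y+z)$ for all $x,y,z\in X$. $K(X)$ is the family of non-empty compact subsets of $X$ with the Pompeiu–Hausdorff metric $d_H(A,B)=\max\{\sup_{a\in A}d(a,B),\sup_{b\in B}d(A,b)\}$. The spectre of $A\subset X$ is $S(A):=\{z\in X:\ \forall_{a\in A}\ (a+z\in A \text{ or } a-z\in A)\}$; it is compact for compact non-empty $A$. *)

theory Defs
  imports "HOL-Analysis.Analysis"
begin

definition Kset :: "'a::metric_space set set" where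
  "Kset = {A. A \<noteq> {} \<and> compact A}"

definition hausdorff_dist :: "'a::metric_space set \<Rightarrow> 'a set \<Rightarrow> real" where
  "hausdorff_dist A B = max (SUP a\<in>A. infdist a B) (SUP b\<in>B. infdist b A)"

definition spectre :: "'a::ab_group_add set \<Rightarrow> 'a set" where
  "spectre A = {z. \<forall>a\<in>A. a + z \<in> A \<or> a - z \<in> A}"

end

theory Submission
  imports Defs
begin

lemma bdd_infdist:
  fixes X Y :: "'a::metric_space set"
  assumes "bounded X" "Y \<noteq> {}"
  shows "bdd_above ((\<lambda>a. infdist a Y) ` X)"
proof -
  obtain c r where cr: "\<And>a. a \<in> X \<Longrightarrow> dist c a \<le> r"
    using assms(1) unfolding bounded_def by blast
  obtain y0 where y0: "y0 \<in> Y" using assms(2) by blast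
  have "infdist a Y \<le> r + dist c y0" if "a \<in> X" for a
  proof -
    have "infdist a Y \<le> dist a y0" by (rule infdist_le[OF y0])
    also have "\<dots> \<le> dist a c + dist c y0" by (rule dist_triangle)
    also have "\<dots> \<le> r + dist c y0" using cr[OF that] by (simp add: dist_commute)
    finally show ?thesis .
  qed
  then show ?thesis unfolding bdd_above_def by blast
qed

lemma hd_le1:
  fixes X Y :: "'a::metric_space set"
  assumes "bounded X" "Y \<noteq> {}" "x \<in> X"
  shows "infdist x Y \<le> hausdorff_dist X Y"
proof -
  have "infdist x Y \<le> (SUP a\<in>X. infdist a Y)"
    by (rule cSUP_upper[OF assms(3) bdd_infdist[OF assms(1,2)]])
  then show ?thesis unfolding hausdorff_dist_def by linarith
qed

lemma hd_le2:
  fixes X Y :: "'a::metric_space set"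
  assumes "bounded Y" "X \<noteq> {}" "y \<in> Y"
  shows "infdist y X \<le> hausdorff_dist X Y"
proof -
  have "infdist y X \<le> (SUP a\<in>Y. infdist a X)"
    by (rule cSUP_upper[OF assms(3) bdd_infdist[OF assms(1,2)]])
  then show ?thesis unfolding hausdorff_dist_def by linarith
qed

lemma approx_pt:
  fixes Y :: "'a::metric_space set"
  assumes "Y \<noteq> {}" "e > 0"
  shows "\<exists>y\<in>Y. dist x y < infdist x Y + e"
proof (rule ccontr)
  assume "\<not> ?thesis"
  then have "\<And>y. y \<in> Y \<Longrightarrow> infdist x Y + e \<le> dist x y" by force
  then have "infdist x Y + e \<le> infdist x Y"
  proof -
    have "infdist x Y + e \<le> (INF y\<in>Y. dist x y)"
      by (rule cINF_greatest) (use assms(1) \<open>\<And>y. y \<in> Y \<Longrightarrow> infdist x Y + e \<le> dist x y\<close> in auto)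
    then show ?thesis using assms(1) by (simp add: infdist_def)
  qed
  then show False using assms(2) by simp
qed

theorem lemma3p8:
  fixes A B :: "'a::{ab_group_add, metric_space} set"
    and As :: "nat \<Rightarrow> 'a set"
  assumes transl_inv: "\<And>x y z :: 'a. dist x y = dist (x + z) (y + z)"
    and A_K: "A \<in> Kset"
    and As_K: "\<And>n. As n \<in> Kset"
    and As_lim: "(\<lambda>n. hausdorff_dist (As n) A) \<longlonglongrightarrow> 0"
    and B_K: "B \<in> Kset"
    and S_lim: "(\<lambda>n. hausdorff_dist (spectre (As n)) B) \<longlonglongrightarrow> 0"
  shows "B \<subseteq> spectre A"
proof
  fix b assume bB: "b \<in> B"
  have Ane: "A \<noteq> {}" and Ac: "compact A" using A_K by (auto simp: Kset_def)
  have Bne: "B \<noteq> {}" and Bc: "compact B" using B_K by (auto simp: Kset_def)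
  have Asne: "As n \<noteq> {}" and Asc: "compact (As n)" for n using As_K[of n] by (auto simp: Kset_def)
  have neg: "dist (- x) (- y) = dist x y" for x y :: 'a
    using transl_inv[of "- x" "- y" "x + y"] by (simp add: dist_commute algebra_simps)
  have add2: "dist (x + y) (x' + y') \<le> dist x x' + dist y y'" for x y x' y' :: 'a
  proof -
    have "dist (x + y) (x' + y') \<le> dist (x + y) (x' + y) + dist (x' + y) (x' + y')"
      by (rule dist_triangle)
    also have "dist (x + y) (x' + y) = dist x x'" using transl_inv[of x x' y] by simp
    also have "dist (x' + y) (x' + y') = dist y y'"
      using transl_inv[of y y' x'] by (simp add: add.commute)
    finally show ?thesis .
  qed
  have sub2: "dist (x - y) (x' - y') \<le> dist x x' + dist y y'" for x y x' y' :: 'a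
    using add2[of x "- y" x' "- y'"] neg[of y y'] by simp
  have Sne: "spectre (As n) \<noteq> {}" for n
  proof -
    have "0 \<in> spectre (As n)" by (simp add: spectre_def)
    then show ?thesis by blast
  qed
  have Sbd: "bounded (spectre (As n))" for n
  proof -
    obtain c r where cr: "\<And>a. a \<in> As n \<Longrightarrow> dist c a \<le> r"
      using compact_imp_bounded[OF Asc[of n]] unfolding bounded_def by blast
    obtain a0 where a0: "a0 \<in> As n" using Asne by blast
    have "dist 0 z \<le> 2 * r" if "z \<in> spectre (As n)" for z
    proof -
      have "a0 + z \<in> As n \<or> a0 - z \<in> As n" using that a0 by (auto simp: spectre_def)
      moreover have "dist 0 z = dist a0 (a0 + z)"
        using transl_inv[of 0 z a0] by (simp add: add.commute)
      moreover have "dist 0 z = dist a0 (a0 - z)"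
        using transl_inv[of z 0 "a0 - z"] by (simp add: dist_commute)
      moreover have "dist a0 w \<le> 2 * r" if "w \<in> As n" for w
        using cr[OF a0] cr[OF that] dist_triangle3[of a0 w c] by linarith
      ultimately show ?thesis by metis
    qed
    then show ?thesis unfolding bounded_def by blast
  qed
  show "b \<in> spectre A"
    unfolding spectre_def
  proof (intro CollectI ballI)
    fix a assume aA: "a \<in> A"
    define F where "F n = hausdorff_dist (As n) A" for n
    define E where "E n = hausdorff_dist (spectre (As n)) B" for n
    define g where "g = min (infdist (a + b) A) (infdist (a - b) A)"
    have key: "g \<le> 2 * F n + E n + 2 / (real n + 1)" for n
    proof -
      have ep: "1 / (real n + 1) > 0" by simp
      obtain an where an: "an \<in> As n" "dist a an < infdist a (As n) + 1 / (real n + 1)"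
        using approx_pt[OF Asne ep] by blast
      obtain zn where zn: "zn \<in> spectre (As n)"
        "dist b zn < infdist b (spectre (As n)) + 1 / (real n + 1)"
        using approx_pt[OF Sne ep] by blast
      have d1: "infdist a (As n) \<le> F n"
        unfolding F_def by (rule hd_le2[OF compact_imp_bounded[OF Ac] Asne aA])
      have d2: "infdist b (spectre (As n)) \<le> E n"
        unfolding E_def by (rule hd_le2[OF compact_imp_bounded[OF Bc] Sne bB])
      have d3: "infdist w A \<le> F n" if "w \<in> As n" for w
        unfolding F_def by (rule hd_le1[OF compact_imp_bounded[OF Asc] Ane that])
      have "an + zn \<in> As n \<or> an - zn \<in> As n" using zn(1) an(1) by (auto simp: spectre_def)
      then show ?thesis
      proof
        assume h: "an + zn \<in> As n"
        have "infdist (a + b) A \<le> infdist (an + zn) A + dist (a + b) (an + zn)"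
          by (rule infdist_triangle)
        also have "\<dots> \<le> F n + (dist a an + dist b zn)"
          using d3[OF h] add2[of a b an zn] by linarith
        finally have "infdist (a + b) A \<le> 2 * F n + E n + 2 / (real n + 1)"
          using an(2) zn(2) d1 d2 by simp
        then show ?thesis unfolding g_def by linarith
      next
        assume h: "an - zn \<in> As n"
        have "infdist (a - b) A \<le> infdist (an - zn) A + dist (a - b) (an - zn)"
          by (rule infdist_triangle)
        also have "\<dots> \<le> F n + (dist a an + dist b zn)"
          using d3[OF h] sub2[of a b an zn] by linarith
        finally have "infdist (a - b) A \<le> 2 * F n + E n + 2 / (real n + 1)"
          using an(2) zn(2) d1 d2 by simp
        then show ?thesis unfolding g_def by linarith
      qed
    qed
    have lim: "(\<lambda>n. 2 * F n + E n + 2 / (real n + 1)) \<longlonglongrightarrow> 0"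
    proof -
      have "(\<lambda>n. 2 / (real n + 1)) \<longlonglongrightarrow> 0"
        using LIMSEQ_inverse_real_of_nat_add[of 0] tendsto_mult_right_zero[of _ sequentially 2]
        by (simp add: divide_inverse add.commute)
      then have "(\<lambda>n. 2 * F n + E n + 2 / (real n + 1)) \<longlonglongrightarrow> 2 * 0 + 0 + 0"
        using As_lim S_lim unfolding F_def E_def
        by (intro tendsto_intros) auto
      then show ?thesis by simp
    qed
    have "g \<le> 0" by (rule LIMSEQ_le_const[OF lim]) (use key in auto)
    then have "infdist (a + b) A = 0 \<or> infdist (a - b) A = 0"
      unfolding g_def using infdist_nonneg[of "a + b" A] infdist_nonneg[of "a - b" A] by linarith
    then show "a + b \<in> A \<or> a - b \<in> A"
      using in_closed_iff_infdist_zero[OF compact_imp_closed[OF Ac] Ane] by blast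
  qed
qed

end
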